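(* Let $(A,A^* )$ be a left-symmetric bialgebroid, let $(A\oplus A^*,\star,\rho,(\cdot,\cdot)_-)$ be the associated pre-symplectic algebroid (with $\star$, $\rho$, $(\cdot,\cdot)_-$ as below), let $H\in\Gamma(A\otimes A)$, $H^\sharp:A^*\to A$ given by $\langle H^\sharp\xi,\eta\rangle=H(\xi,\eta)$, and let $G_H=\{H^\sharp(\xi)+\xi:\xi\in A^*\}$ be its graph. Then $G_H$ is a Dirac structure of $(A\oplus A^*,\star,\rho,(\cdot,\cdot)_-)$ if and only if $H\in\Gamma(\mathrm{Sym}^2(A))$ and $$\delta_*H-\llbracket H,H\rrbracket=0,$$ where $H\in\Gamma(A\otimes A)$ is regarded as a 2-cochain of the left-symmetric algebroid $A^*$.
   Context: A left-symmetric algebroid is a vector bundle $A\to M$ with an $\mathbb R$-bilinear multiplication $\cdot_A$ on $\Gamma(A)$ with $x\cdot_A(y\cdot_Az)-(x\cdot_Ay)\cdot_Az$ symmetric in $x,y$, and an anchor $a_A$ with $x\cdot_A(fy)=f(x\cdot_Ay)+a_A(x)(f)y$, $(fx)\cdot_Ay=f(x\cdot_Ay)$; $[x,y]_A=x\cdot_Ay-y\cdot_Ax$; $d$ the differential of $(A,[\cdot,\cdot]_A,a_A)$; $\langle\mathcal L_x\xi,y\rangle=a_A(x)\langle\xi,y\rangle-\langle\xi,[x,y]_A\rangle$, $\langle R_x\xi,y\rangle=-\langle\xi,y\cdot_Ax\rangle$; analogous $[\cdot,\cdot]_{A^*}$, $d_*$ ($\langle d_*f,\xi\rangle=a_{A^*}(\xi)f$),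 $\mathcal L_\xi x$, $\langle R_\xi x,\eta\rangle=-\langle x,\eta\cdot_{A^*}\xi\rangle$ for $A^*$. Coboundary of $A$: $C^{n+1}(A)=\Gamma(\wedge^nA^*\otimes A^* )$, $\delta\varphi(x_1,\dots,x_{n+1})=\sum_{i=1}^n(-1)^{i+1}a_A(x_i)\varphi(\dots,\hat{x_i},\dots,x_{n+1})-\sum_{i=1}^n(-1)^{i+1}\varphi(\dots,\hat{x_i},\dots,x_n,x_i\cdot_Ax_{n+1})+\sum_{i<j\le n}(-1)^{i+j}\varphi([x_i,x_j]_A,\dots,\hat{x_i},\dots,\hat{x_j},\dots,x_{n+1})$; $\delta_*$ is the same for $A^*$ (acting on $\Gamma(\wedge^nA\otimes A)$). $\mathfrak L_x(y_1\otimes y_2)=(x\cdot_Ay_1)\otimes y_2+y_1\otimes[x,y_2]_A$, similarly $\mathfrak L_\xi$. $(A,A^* )$ is a left-symmetric bialgebroid if $\delta[\xi,\eta]_{A^*}=\mathfrak L_\xi\delta\eta-\mathfrak L_\eta\delta\xi$ and $\delta_*[x,y]_A=\mathfrak L_x\delta_*y-\mathfrak L_y\delta_*x$. The associated structure on $A\oplus A^*$: $e_1\star e_2=(x_1\cdot_Ax_2+\mathcal L_{\xi_1}x_2-R_{\xi_2}x_1-\frac12d_*(e_1,e_2)_+)+(\xi_1\cdot_{A^*}\xi_2+\mathcal L_{x_1}\xi_2-R_{x_2}\xi_1-\frac12d(e_1,e_2)_+)$ for $e_i=x_i+\xi_i$; $\rho(x+\xi)=a_A(x)+a_{A^*}(\xi)$;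 $(x+\xi,y+\eta)_\pm=\langle\xi,y\rangle\pm\langle\eta,x\rangle$. A Dirac structure is a subbundle maximal isotropic for $(\cdot,\cdot)_-$ whose sections are closed under $\star$. For $H\in\Gamma(\mathrm{Sym}^2(A))$ (symmetric elements of $A\otimes A$), $\llbracket H,H\rrbracket\in\Gamma(\wedge^2A\otimes A)$ is $\llbracket H,H\rrbracket(\xi_1,\xi_2,\xi_3)=a_A(H^\sharp\xi_1)\langle H^\sharp\xi_2,\xi_3\rangle-a_A(H^\sharp\xi_2)\langle H^\sharp\xi_1,\xi_3\rangle+\langle\xi_1,H^\sharp\xi_2\cdot_AH^\sharp\xi_3\rangle-\langle\xi_2,H^\sharp\xi_1\cdot_AH^\sharp\xi_3\rangle-\langle\xi_3,[H^\sharp\xi_1,H^\sharp\xi_2]_A\rangle$. *)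

theory Defs
  imports Main "HOL.Real_Vector_Spaces"
begin

text \<open>Algebraic (section-level) model of a pair of vector bundles A, A* over M.
  'f plays the role of the commutative real algebra of smooth functions on M,
  'a the module of sections of A, 'b the module of sections of A*.\<close>

record ('f, 'a, 'b) lsb_data =
  smA   :: "'f \<Rightarrow> 'a \<Rightarrow> 'a"
  smB   :: "'f \<Rightarrow> 'b \<Rightarrow> 'b"
  dpair :: "'b \<Rightarrow> 'a \<Rightarrow> 'f"
  mulA  :: "'a \<Rightarrow> 'a \<Rightarrow> 'a"
  ancA  :: "'a \<Rightarrow> 'f \<Rightarrow> 'f"
  mulB  :: "'b \<Rightarrow> 'b \<Rightarrow> 'b"
  ancB  :: "'b \<Rightarrow> 'f \<Rightarrow> 'f"

definition fmodule :: "('f::comm_ring_1 \<Rightarrow> 'a::ab_group_add \<Rightarrow> 'a) \<Rightarrow> bool" where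
  "fmodule sm \<longleftrightarrow>
     (\<forall>f g x. sm (f + g) x = sm f x + sm g x) \<and>
     (\<forall>f x y. sm f (x + y) = sm f x + sm f y) \<and>
     (\<forall>f g x. sm (f * g) x = sm f (sm g x)) \<and>
     (\<forall>x. sm 1 x = x)"

definition flinear :: "('f::comm_ring_1 \<Rightarrow> 'a::ab_group_add \<Rightarrow> 'a) \<Rightarrow> ('a \<Rightarrow> 'f) \<Rightarrow> bool" where
  "flinear sm \<phi> \<longleftrightarrow> (\<forall>x y. \<phi> (x + y) = \<phi> x + \<phi> y) \<and> (\<forall>f x. \<phi> (sm f x) = f * \<phi> x)"

text \<open>A* is the dual of A: the pairing is C-infinity-bilinear, nondegenerate, and
  every C-infinity-linear functional on either side is represented (as is the case
  for sections of a finite-rank vector bundle and its dual).\<close>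
definition dual_pairing :: "('f::{comm_ring_1,real_algebra_1}, 'a::ab_group_add, 'b::ab_group_add, 'z) lsb_data_scheme \<Rightarrow> bool" where
  "dual_pairing S \<longleftrightarrow>
     (\<forall>\<xi> \<eta> x. dpair S (\<xi> + \<eta>) x = dpair S \<xi> x + dpair S \<eta> x) \<and>
     (\<forall>\<xi> x y. dpair S \<xi> (x + y) = dpair S \<xi> x + dpair S \<xi> y) \<and>
     (\<forall>f \<xi> x. dpair S (smB S f \<xi>) x = f * dpair S \<xi> x) \<and>
     (\<forall>f \<xi> x. dpair S \<xi> (smA S f x) = f * dpair S \<xi> x) \<and>
     (\<forall>\<xi>. (\<forall>x. dpair S \<xi> x = 0) \<longrightarrow> \<xi> = 0) \<and>
     (\<forall>x. (\<forall>\<xi>. dpair S \<xi> x = 0) \<longrightarrow> x = 0) \<and>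
     (\<forall>\<phi>. flinear (smA S) \<phi> \<longrightarrow> (\<exists>\<xi>. \<forall>x. dpair S \<xi> x = \<phi> x)) \<and>
     (\<forall>\<psi>. flinear (smB S) \<psi> \<longrightarrow> (\<exists>x. \<forall>\<xi>. dpair S \<xi> x = \<psi> \<xi>))"

text \<open>The anchor is a bundle map into TM:
  C-infinity-linear in its argument, with values real-linear derivations of 'f.\<close>
definition ls_algebroid ::
  "('f::{comm_ring_1,real_algebra_1} \<Rightarrow> 'a::ab_group_add \<Rightarrow> 'a) \<Rightarrow> ('a \<Rightarrow> 'a \<Rightarrow> 'a) \<Rightarrow> ('a \<Rightarrow> 'f \<Rightarrow> 'f) \<Rightarrow> bool" where
  "ls_algebroid sm m a \<longleftrightarrow>
     (\<forall>x y z. m x (y + z) = m x y + m x z) \<and>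
     (\<forall>x y z. m (x + y) z = m x z + m y z) \<and>
     (\<forall>c::real. \<forall>x y. m x (sm (of_real c) y) = sm (of_real c) (m x y)) \<and>
     (\<forall>c::real. \<forall>x y. m (sm (of_real c) x) y = sm (of_real c) (m x y)) \<and>
     (\<forall>x y z. m x (m y z) - m (m x y) z = m y (m x z) - m (m y x) z) \<and>
     (\<forall>f x y. m x (sm f y) = sm f (m x y) + sm (a x f) y) \<and>
     (\<forall>f x y. m (sm f x) y = sm f (m x y)) \<and>
     (\<forall>x y f. a (x + y) f = a x f + a y f) \<and>
     (\<forall>g x f. a (sm g x) f = g * a x f) \<and>
     (\<forall>x f g. a x (f + g) = a x f + a x g) \<and>
     (\<forall>x f g. a x (f * g) = a x f * g + f * a x g) \<and>
     (\<forall>x (c::real) f. a x (of_real c * f) = of_real c * a x f)"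

definition repA :: "('f::{comm_ring_1,real_algebra_1}, 'a::ab_group_add, 'b::ab_group_add, 'z) lsb_data_scheme \<Rightarrow> ('b \<Rightarrow> 'f) \<Rightarrow> 'a" where
  "repA S \<psi> = (SOME x. \<forall>\<xi>. dpair S \<xi> x = \<psi> \<xi>)"

definition repB :: "('f::{comm_ring_1,real_algebra_1}, 'a::ab_group_add, 'b::ab_group_add, 'z) lsb_data_scheme \<Rightarrow> ('a \<Rightarrow> 'f) \<Rightarrow> 'b" where
  "repB S \<phi> = (SOME \<xi>. \<forall>x. dpair S \<xi> x = \<phi> x)"

definition brA :: "('f::{comm_ring_1,real_algebra_1}, 'a::ab_group_add, 'b::ab_group_add, 'z) lsb_data_scheme \<Rightarrow> 'a \<Rightarrow> 'a \<Rightarrow> 'a" where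
  "brA S x y = mulA S x y - mulA S y x"

definition brB :: "('f::{comm_ring_1,real_algebra_1}, 'a::ab_group_add, 'b::ab_group_add, 'z) lsb_data_scheme \<Rightarrow> 'b \<Rightarrow> 'b \<Rightarrow> 'b" where
  "brB S \<xi> \<eta> = mulB S \<xi> \<eta> - mulB S \<eta> \<xi>"

definition dA :: "('f::{comm_ring_1,real_algebra_1}, 'a::ab_group_add, 'b::ab_group_add, 'z) lsb_data_scheme \<Rightarrow> 'f \<Rightarrow> 'b" where
  "dA S f = repB S (\<lambda>x. ancA S x f)"

definition dB :: "('f::{comm_ring_1,real_algebra_1}, 'a::ab_group_add, 'b::ab_group_add, 'z) lsb_data_scheme \<Rightarrow> 'f \<Rightarrow> 'a" where
  "dB S f = repA S (\<lambda>\<xi>. ancB S \<xi> f)"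

definition LieA :: "('f::{comm_ring_1,real_algebra_1}, 'a::ab_group_add, 'b::ab_group_add, 'z) lsb_data_scheme \<Rightarrow> 'a \<Rightarrow> 'b \<Rightarrow> 'b" where
  "LieA S x \<xi> = repB S (\<lambda>y. ancA S x (dpair S \<xi> y) - dpair S \<xi> (brA S x y))"

definition RA :: "('f::{comm_ring_1,real_algebra_1}, 'a::ab_group_add, 'b::ab_group_add, 'z) lsb_data_scheme \<Rightarrow> 'a \<Rightarrow> 'b \<Rightarrow> 'b" where
  "RA S x \<xi> = repB S (\<lambda>y. - dpair S \<xi> (mulA S y x))"

definition LieB :: "('f::{comm_ring_1,real_algebra_1}, 'a::ab_group_add, 'b::ab_group_add, 'z) lsb_data_scheme \<Rightarrow> 'b \<Rightarrow> 'a \<Rightarrow> 'a" where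
  "LieB S \<xi> x = repA S (\<lambda>\<eta>. ancB S \<xi> (dpair S \<eta> x) - dpair S (brB S \<xi> \<eta>) x)"

definition RB :: "('f::{comm_ring_1,real_algebra_1}, 'a::ab_group_add, 'b::ab_group_add, 'z) lsb_data_scheme \<Rightarrow> 'b \<Rightarrow> 'a \<Rightarrow> 'a" where
  "RB S \<xi> x = repA S (\<lambda>\<eta>. - dpair S (mulB S \<eta> \<xi>) x)"

definition lamA :: "('f::{comm_ring_1,real_algebra_1}, 'a::ab_group_add, 'b::ab_group_add, 'z) lsb_data_scheme \<Rightarrow> 'a \<Rightarrow> 'b \<Rightarrow> 'b" where
  "lamA S x \<xi> = repB S (\<lambda>y. ancA S x (dpair S \<xi> y) - dpair S \<xi> (mulA S x y))"

definition lamB :: "('f::{comm_ring_1,real_algebra_1}, 'a::ab_group_add, 'b::ab_group_add, 'z) lsb_data_scheme \<Rightarrow> 'b \<Rightarrow> 'a \<Rightarrow> 'a" where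
  "lamB S \<xi> x = repA S (\<lambda>\<eta>. ancB S \<xi> (dpair S \<eta> x) - dpair S (mulB S \<xi> \<eta>) x)"

text \<open>Sections of A*\<otimes>A* are represented as C-infinity-bilinear forms on sections
  of A (T(x1,x2)), sections of A\<otimes>A as bilinear forms on sections of A*.
  frakL_xi (eta1\<otimes>eta2) = (xi.eta1)\<otimes>eta2 + eta1\<otimes>[xi,eta2] then reads
  (frakL_xi T)(x1,x2) = a*(xi)(T(x1,x2)) - T(lamB xi x1, x2) - T(x1, L_xi x2).\<close>
definition frakLB :: "('f::{comm_ring_1,real_algebra_1}, 'a::ab_group_add, 'b::ab_group_add, 'z) lsb_data_scheme \<Rightarrow> 'b \<Rightarrow> ('a \<Rightarrow> 'a \<Rightarrow> 'f) \<Rightarrow> 'a \<Rightarrow> 'a \<Rightarrow> 'f" where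
  "frakLB S \<xi> T x1 x2 = ancB S \<xi> (T x1 x2) - T (lamB S \<xi> x1) x2 - T x1 (LieB S \<xi> x2)"

definition frakLA :: "('f::{comm_ring_1,real_algebra_1}, 'a::ab_group_add, 'b::ab_group_add, 'z) lsb_data_scheme \<Rightarrow> 'a \<Rightarrow> ('b \<Rightarrow> 'b \<Rightarrow> 'f) \<Rightarrow> 'b \<Rightarrow> 'b \<Rightarrow> 'f" where
  "frakLA S x T \<xi>1 \<xi>2 = ancA S x (T \<xi>1 \<xi>2) - T (lamA S x \<xi>1) \<xi>2 - T \<xi>1 (LieA S x \<xi>2)"

definition cobA1 :: "('f::{comm_ring_1,real_algebra_1}, 'a::ab_group_add, 'b::ab_group_add, 'z) lsb_data_scheme \<Rightarrow> 'b \<Rightarrow> 'a \<Rightarrow> 'a \<Rightarrow> 'f" where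
  "cobA1 S \<eta> x1 x2 = ancA S x1 (dpair S \<eta> x2) - dpair S \<eta> (mulA S x1 x2)"

definition cobB1 :: "('f::{comm_ring_1,real_algebra_1}, 'a::ab_group_add, 'b::ab_group_add, 'z) lsb_data_scheme \<Rightarrow> 'a \<Rightarrow> 'b \<Rightarrow> 'b \<Rightarrow> 'f" where
  "cobB1 S y \<xi>1 \<xi>2 = ancB S \<xi>1 (dpair S \<xi>2 y) - dpair S (mulB S \<xi>1 \<xi>2) y"

definition cobB2 :: "('f::{comm_ring_1,real_algebra_1}, 'a::ab_group_add, 'b::ab_group_add, 'z) lsb_data_scheme \<Rightarrow> ('b \<Rightarrow> 'b \<Rightarrow> 'f) \<Rightarrow> 'b \<Rightarrow> 'b \<Rightarrow> 'b \<Rightarrow> 'f" where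
  "cobB2 S H \<xi>1 \<xi>2 \<xi>3 =
     ancB S \<xi>1 (H \<xi>2 \<xi>3) - ancB S \<xi>2 (H \<xi>1 \<xi>3)
     - H \<xi>2 (mulB S \<xi>1 \<xi>3) + H \<xi>1 (mulB S \<xi>2 \<xi>3)
     - H (brB S \<xi>1 \<xi>2) \<xi>3"

definition ls_bialgebroid :: "('f::{comm_ring_1,real_algebra_1}, 'a::ab_group_add, 'b::ab_group_add) lsb_data \<Rightarrow> bool" where
  "ls_bialgebroid S \<longleftrightarrow>
     fmodule (smA S) \<and> fmodule (smB S) \<and> dual_pairing S \<and>
     ls_algebroid (smA S) (mulA S) (ancA S) \<and>
     ls_algebroid (smB S) (mulB S) (ancB S) \<and>
     (\<forall>\<xi> \<eta> x1 x2. cobA1 S (brB S \<xi> \<eta>) x1 x2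
        = frakLB S \<xi> (cobA1 S \<eta>) x1 x2 - frakLB S \<eta> (cobA1 S \<xi>) x1 x2) \<and>
     (\<forall>x y \<xi>1 \<xi>2. cobB1 S (brA S x y) \<xi>1 \<xi>2
        = frakLA S x (cobB1 S y) \<xi>1 \<xi>2 - frakLA S y (cobB1 S x) \<xi>1 \<xi>2)"

text \<open>The structure on A \<oplus> A*, sections being pairs (x, xi) = x + xi.\<close>
definition pform_plus :: "('f::{comm_ring_1,real_algebra_1}, 'a::ab_group_add, 'b::ab_group_add, 'z) lsb_data_scheme \<Rightarrow> 'a \<times> 'b \<Rightarrow> 'a \<times> 'b \<Rightarrow> 'f" where
  "pform_plus S e1 e2 = dpair S (snd e1) (fst e2) + dpair S (snd e2) (fst e1)"

definition pform_minus :: "('f::{comm_ring_1,real_algebra_1}, 'a::ab_group_add, 'b::ab_group_add, 'z) lsb_data_scheme \<Rightarrow> 'a \<times> 'b \<Rightarrow> 'a \<times> 'b \<Rightarrow> 'f" where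
  "pform_minus S e1 e2 = dpair S (snd e1) (fst e2) - dpair S (snd e2) (fst e1)"

definition star :: "('f::{comm_ring_1,real_algebra_1}, 'a::ab_group_add, 'b::ab_group_add, 'z) lsb_data_scheme
    \<Rightarrow> 'a \<times> 'b \<Rightarrow> 'a \<times> 'b \<Rightarrow> 'a \<times> 'b" where
  "star S e1 e2 =
     (mulA S (fst e1) (fst e2) + LieB S (snd e1) (fst e2) - RB S (snd e2) (fst e1)
        - smA S (of_real (1/2)) (dB S (pform_plus S e1 e2)),
      mulB S (snd e1) (snd e2) + LieA S (fst e1) (snd e2) - RA S (fst e2) (snd e1)
        - smB S (of_real (1/2)) (dA S (pform_plus S e1 e2)))"

text \<open>Subbundles are represented by their C-infinity-submodules of sections.\<close>
definition submod :: "('f::{comm_ring_1,real_algebra_1}, 'a::ab_group_add, 'b::ab_group_add, 'z) lsb_data_scheme \<Rightarrow> ('a \<times> 'b) set \<Rightarrow> bool" where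
  "submod S L \<longleftrightarrow> (0, 0) \<in> L \<and> (\<forall>e1\<in>L. \<forall>e2\<in>L. (fst e1 + fst e2, snd e1 + snd e2) \<in> L) \<and>
     (\<forall>f. \<forall>e\<in>L. (smA S f (fst e), smB S f (snd e)) \<in> L)"

definition isotropic_minus :: "('f::{comm_ring_1,real_algebra_1}, 'a::ab_group_add, 'b::ab_group_add, 'z) lsb_data_scheme \<Rightarrow> ('a \<times> 'b) set \<Rightarrow> bool" where
  "isotropic_minus S L \<longleftrightarrow> (\<forall>e1\<in>L. \<forall>e2\<in>L. pform_minus S e1 e2 = 0)"

definition max_isotropic_minus :: "('f::{comm_ring_1,real_algebra_1}, 'a::ab_group_add, 'b::ab_group_add, 'z) lsb_data_scheme \<Rightarrow> ('a \<times> 'b) set \<Rightarrow> bool" where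
  "max_isotropic_minus S L \<longleftrightarrow> submod S L \<and> isotropic_minus S L \<and>
     (\<forall>L'. submod S L' \<and> isotropic_minus S L' \<and> L \<subseteq> L' \<longrightarrow> L' = L)"

definition dirac :: "('f::{comm_ring_1,real_algebra_1}, 'a::ab_group_add, 'b::ab_group_add, 'z) lsb_data_scheme \<Rightarrow> ('a \<times> 'b) set \<Rightarrow> bool" where
  "dirac S L \<longleftrightarrow> max_isotropic_minus S L \<and> (\<forall>e1\<in>L. \<forall>e2\<in>L. star S e1 e2 \<in> L)"

text \<open>H in Gamma(A\<otimes>A) as a C-infinity-bilinear form on sections of A*.\<close>
definition tensorAA :: "('f::{comm_ring_1,real_algebra_1}, 'a::ab_group_add, 'b::ab_group_add, 'z) lsb_data_scheme \<Rightarrow> ('b \<Rightarrow> 'b \<Rightarrow> 'f) \<Rightarrow> bool" where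
  "tensorAA S H \<longleftrightarrow> (\<forall>\<xi>. flinear (smB S) (H \<xi>)) \<and> (\<forall>\<eta>. flinear (smB S) (\<lambda>\<xi>. H \<xi> \<eta>))"

definition hsharp :: "('f::{comm_ring_1,real_algebra_1}, 'a::ab_group_add, 'b::ab_group_add, 'z) lsb_data_scheme \<Rightarrow> ('b \<Rightarrow> 'b \<Rightarrow> 'f) \<Rightarrow> 'b \<Rightarrow> 'a" where
  "hsharp S H \<xi> = repA S (\<lambda>\<eta>. H \<xi> \<eta>)"

definition graphH :: "('f::{comm_ring_1,real_algebra_1}, 'a::ab_group_add, 'b::ab_group_add, 'z) lsb_data_scheme \<Rightarrow> ('b \<Rightarrow> 'b \<Rightarrow> 'f) \<Rightarrow> ('a \<times> 'b) set" where
  "graphH S H = {(hsharp S H \<xi>, \<xi>) | \<xi>. True}"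

definition bigbrHH :: "('f::{comm_ring_1,real_algebra_1}, 'a::ab_group_add, 'b::ab_group_add, 'z) lsb_data_scheme \<Rightarrow> ('b \<Rightarrow> 'b \<Rightarrow> 'f) \<Rightarrow> 'b \<Rightarrow> 'b \<Rightarrow> 'b \<Rightarrow> 'f" where
  "bigbrHH S H \<xi>1 \<xi>2 \<xi>3 =
     ancA S (hsharp S H \<xi>1) (dpair S \<xi>3 (hsharp S H \<xi>2))
     - ancA S (hsharp S H \<xi>2) (dpair S \<xi>3 (hsharp S H \<xi>1))
     + dpair S \<xi>1 (mulA S (hsharp S H \<xi>2) (hsharp S H \<xi>3))
     - dpair S \<xi>2 (mulA S (hsharp S H \<xi>1) (hsharp S H \<xi>3))
     - dpair S \<xi>3 (brA S (hsharp S H \<xi>1) (hsharp S H \<xi>2))"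

end

theory Submission
  imports Defs
begin

lemma lsa:
  assumes "ls_algebroid sm m a"
  shows "m x (y + z) = m x y + m x z"
    and "m (x + y) z = m x z + m y z"
    and "m x (sm f y) = sm f (m x y) + sm (a x f) y"
    and "m (sm f x) y = sm f (m x y)"
    and "a (x + y) f = a x f + a y f"
    and "a (sm g x) f = g * a x f"
    and "a x (f + g) = a x f + a x g"
    and "a x (f * g) = a x f * g + f * a x g"
  using assms unfolding ls_algebroid_def by (simp_all del: of_real_divide)

lemma fm:
  assumes "fmodule sm"
  shows "sm 0 x = 0" and "sm (-1) x = - x"
proof -
  have "sm (0 + 0) x = sm 0 x + sm 0 x" using assms unfolding fmodule_def by blast
  then show a: "sm 0 x = 0" by simp
  have "sm (1 + -1) x = sm 1 x + sm (-1) x" using assms unfolding fmodule_def by blast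
  moreover have "sm 1 x = x" using assms unfolding fmodule_def by blast
  ultimately show "sm (-1) x = - x" using a by (simp add: eq_neg_iff_add_eq_0 add.commute)
qed

context
  fixes S :: "('f::{comm_ring_1,real_algebra_1}, 'a::ab_group_add, 'b::ab_group_add) lsb_data"
  assumes bi: "ls_bialgebroid S"
begin

lemma fmA: "fmodule (smA S)" using bi unfolding ls_bialgebroid_def by (elim conjE)
lemma fmB: "fmodule (smB S)" using bi unfolding ls_bialgebroid_def by (elim conjE)
lemma dpS: "dual_pairing S" using bi unfolding ls_bialgebroid_def by (elim conjE)
lemma lsA: "ls_algebroid (smA S) (mulA S) (ancA S)" using bi unfolding ls_bialgebroid_def by (elim conjE)
lemma lsB: "ls_algebroid (smB S) (mulB S) (ancB S)" using bi unfolding ls_bialgebroid_def by (elim conjE)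
lemma dps: "(\<forall>\<xi> \<eta> x. dpair S (\<xi> + \<eta>) x = dpair S \<xi> x + dpair S \<eta> x) \<and>
     (\<forall>\<xi> x y. dpair S \<xi> (x + y) = dpair S \<xi> x + dpair S \<xi> y) \<and>
     (\<forall>f \<xi> x. dpair S (smB S f \<xi>) x = f * dpair S \<xi> x) \<and>
     (\<forall>f \<xi> x. dpair S \<xi> (smA S f x) = f * dpair S \<xi> x) \<and>
     (\<forall>\<xi>. (\<forall>x. dpair S \<xi> x = 0) \<longrightarrow> \<xi> = 0) \<and>
     (\<forall>x. (\<forall>\<xi>. dpair S \<xi> x = 0) \<longrightarrow> x = 0) \<and>
     (\<forall>\<phi>. flinear (smA S) \<phi> \<longrightarrow> (\<exists>\<xi>. \<forall>x. dpair S \<xi> x = \<phi> x)) \<and>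
     (\<forall>\<psi>. flinear (smB S) \<psi> \<longrightarrow> (\<exists>x. \<forall>\<xi>. dpair S \<xi> x = \<psi> \<xi>))"
  using dpS unfolding dual_pairing_def .

lemma dp_addL: "dpair S (\<xi> + \<eta>) x = dpair S \<xi> x + dpair S \<eta> x"
  using dps[THEN conjunct1] by blast
lemma dp_addR: "dpair S \<xi> (x + y) = dpair S \<xi> x + dpair S \<xi> y"
  using dps[THEN conjunct2, THEN conjunct1] by blast
lemma dp_smB: "dpair S (smB S f \<xi>) x = f * dpair S \<xi> x"
  using dps[THEN conjunct2, THEN conjunct2, THEN conjunct1] by blast
lemma dp_smA: "dpair S \<xi> (smA S f x) = f * dpair S \<xi> x"
  using dps[THEN conjunct2, THEN conjunct2, THEN conjunct2, THEN conjunct1] by blast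
lemma nondegB: "(\<And>x. dpair S \<xi> x = 0) \<Longrightarrow> \<xi> = 0"
  using dps[THEN conjunct2, THEN conjunct2, THEN conjunct2, THEN conjunct2, THEN conjunct1] by blast
lemma nondegA: "(\<And>\<xi>. dpair S \<xi> x = 0) \<Longrightarrow> x = 0"
  using dps[THEN conjunct2, THEN conjunct2, THEN conjunct2, THEN conjunct2, THEN conjunct2, THEN conjunct1] by blast
lemma reprA: "flinear (smA S) \<phi> \<Longrightarrow> \<exists>\<xi>. \<forall>x. dpair S \<xi> x = \<phi> x"
  using dps[THEN conjunct2, THEN conjunct2, THEN conjunct2, THEN conjunct2, THEN conjunct2, THEN conjunct2, THEN conjunct1] by blast
lemma reprB: "flinear (smB S) \<psi> \<Longrightarrow> \<exists>x. \<forall>\<xi>. dpair S \<xi> x = \<psi> \<xi>"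
  using dps[THEN conjunct2, THEN conjunct2, THEN conjunct2, THEN conjunct2, THEN conjunct2, THEN conjunct2, THEN conjunct2] by blast

lemma dp_diffL: "dpair S (\<xi> - \<eta>) x = dpair S \<xi> x - dpair S \<eta> x"
proof -
  have "dpair S \<xi> x = dpair S (\<xi> - \<eta>) x + dpair S \<eta> x" using dp_addL[of "\<xi> - \<eta>" \<eta> x] by simp
  then show ?thesis by (simp add: algebra_simps)
qed
lemma dp_diffR: "dpair S \<xi> (x - y) = dpair S \<xi> x - dpair S \<xi> y"
proof -
  have "dpair S \<xi> x = dpair S \<xi> (x - y) + dpair S \<xi> y" using dp_addR[of \<xi> "x - y" y] by simp
  then show ?thesis by (simp add: algebra_simps)
qed
lemma dp_0L: "dpair S 0 x = 0" using dp_diffL[of 0 0 x] by simp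
lemma dp_0R: "dpair S \<xi> 0 = 0" using dp_diffR[of \<xi> 0 0] by simp

lemma repA_eq: "flinear (smB S) \<psi> \<Longrightarrow> dpair S \<xi> (repA S \<psi>) = \<psi> \<xi>"
proof -
  assume "flinear (smB S) \<psi>"
  from reprB[OF this] have "\<forall>\<xi>. dpair S \<xi> (SOME x. \<forall>\<xi>. dpair S \<xi> x = \<psi> \<xi>) = \<psi> \<xi>" by (rule someI_ex)
  thus ?thesis by (simp add: repA_def)
qed
lemma repB_eq: "flinear (smA S) \<phi> \<Longrightarrow> dpair S (repB S \<phi>) x = \<phi> x"
proof -
  assume "flinear (smA S) \<phi>"
  from reprA[OF this] have "\<forall>x. dpair S (SOME \<xi>. \<forall>x. dpair S \<xi> x = \<phi> x) x = \<phi> x" by (rule someI_ex)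
  thus ?thesis by (simp add: repB_def)
qed

lemma LieB_pair: "dpair S \<eta> (LieB S \<xi> x) = ancB S \<xi> (dpair S \<eta> x) - dpair S (brB S \<xi> \<eta>) x"
  unfolding LieB_def
  by (rule repA_eq) (auto simp: flinear_def brB_def dp_addL dp_diffL dp_smB lsa[OF lsB] algebra_simps)

lemma LieA_pair: "dpair S (LieA S x \<xi>) y = ancA S x (dpair S \<xi> y) - dpair S \<xi> (brA S x y)"
  unfolding LieA_def
  by (rule repB_eq) (auto simp: flinear_def brA_def dp_addR dp_diffR dp_smA lsa[OF lsA] algebra_simps)

lemma RB_pair: "dpair S \<eta> (RB S \<xi> x) = - dpair S (mulB S \<eta> \<xi>) x"
  unfolding RB_def
  by (rule repA_eq) (auto simp: flinear_def dp_addL dp_smB lsa[OF lsB] algebra_simps)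

lemma RA_pair: "dpair S (RA S x \<xi>) y = - dpair S \<xi> (mulA S y x)"
  unfolding RA_def
  by (rule repB_eq) (auto simp: flinear_def dp_addR dp_smA lsa[OF lsA] algebra_simps)

lemma dB_pair: "dpair S \<eta> (dB S f) = ancB S \<eta> f"
  unfolding dB_def
  by (rule repA_eq) (auto simp: flinear_def lsa[OF lsB])

lemma dA_pair: "dpair S (dA S f) x = ancA S x f"
  unfolding dA_def
  by (rule repB_eq) (auto simp: flinear_def lsa[OF lsA])


lemma half: "of_real (1/2) * (a + a) = (a::'f)"
proof -
  have "of_real (1/2) * (a + a) = (of_real (1/2) + of_real (1/2)) * a" by (simp add: algebra_simps)
  also have "\<dots> = of_real (1/2 + 1/2) * a" by (simp only: of_real_add)
  finally show ?thesis by simp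
qed

context
  fixes H :: "'b \<Rightarrow> 'b \<Rightarrow> 'f"
  assumes tH: "tensorAA S H"
begin

lemma hs_pair: "dpair S \<eta> (hsharp S H \<xi>) = H \<xi> \<eta>"
  unfolding hsharp_def by (rule repA_eq) (use tH in \<open>simp add: tensorAA_def\<close>)

lemma H_addL: "H (\<xi> + \<eta>) \<theta> = H \<xi> \<theta> + H \<eta> \<theta>"
  using tH unfolding tensorAA_def flinear_def by blast
lemma H_smL: "H (smB S f \<xi>) \<theta> = f * H \<xi> \<theta>"
  using tH unfolding tensorAA_def flinear_def by blast

lemma hs_add: "hsharp S H (\<xi> + \<eta>) = hsharp S H \<xi> + hsharp S H \<eta>"
proof -
  have "hsharp S H (\<xi> + \<eta>) - (hsharp S H \<xi> + hsharp S H \<eta>) = 0"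
    by (rule nondegA) (simp add: dp_diffR dp_addR hs_pair H_addL)
  thus ?thesis by simp
qed

lemma hs_sm: "hsharp S H (smB S f \<xi>) = smA S f (hsharp S H \<xi>)"
proof -
  have "hsharp S H (smB S f \<xi>) - smA S f (hsharp S H \<xi>) = 0"
    by (rule nondegA) (simp add: dp_diffR dp_smA hs_pair H_smL)
  thus ?thesis by simp
qed

lemma hs_0: "hsharp S H 0 = 0"
  using hs_add[of 0 0] by simp

lemma in_graph: "(x, \<xi>) \<in> graphH S H \<longleftrightarrow> x = hsharp S H \<xi>"
  by (auto simp: graphH_def)

lemma graph_submod: "submod S (graphH S H)"
  unfolding submod_def graphH_def by (auto simp: hs_add hs_sm hs_0)

context
  assumes sym: "\<And>\<xi> \<eta>. H \<xi> \<eta> = H \<eta> \<xi>"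
begin

lemma key:
  "dpair S \<theta> (fst (star S (hsharp S H \<xi>, \<xi>) (hsharp S H \<eta>, \<eta>)))
     - dpair S (snd (star S (hsharp S H \<xi>, \<xi>) (hsharp S H \<eta>, \<eta>))) (hsharp S H \<theta>)
   = cobB2 S H \<xi> \<theta> \<eta> - bigbrHH S H \<xi> \<theta> \<eta>"
proof -
  define x where "x = hsharp S H \<xi>"
  define y where "y = hsharp S H \<eta>"
  define z where "z = hsharp S H \<theta>"
  define p where "p = H \<xi> \<eta>"
  have pp: "pform_plus S (hsharp S H \<xi>, \<xi>) (hsharp S H \<eta>, \<eta>) = 2 * p"
    by (simp add: pform_plus_def hs_pair p_def sym[of \<eta> \<xi>])
  have hdB: "of_real (1/2) * ancB S \<theta> (2 * p) = ancB S \<theta> p"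
    by (simp only: mult_2 lsa(7)[OF lsB] half)
  have hdA: "of_real (1/2) * ancA S z (2 * p) = ancA S z p"
    by (simp only: mult_2 lsa(7)[OF lsA] half)
  have e1: "dpair S \<theta> (fst (star S (x, \<xi>) (y, \<eta>))) =
     dpair S \<theta> (mulA S x y) + (ancB S \<xi> (H \<theta> \<eta>) - H (brB S \<xi> \<theta>) \<eta>) - (- H \<xi> (mulB S \<theta> \<eta>))
     - ancB S \<theta> p"
    by (simp add: star_def pp dp_diffR dp_addR LieB_pair RB_pair dp_smA dB_pair hdB
        y_def x_def hs_pair sym[of \<eta> \<theta>] sym[of \<eta> "brB S \<xi> \<theta>"])
  have hz: "\<And>w. dpair S w z = H \<theta> w" by (simp add: z_def hs_pair)
  have e2: "dpair S (snd (star S (x, \<xi>) (y, \<eta>))) z =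
     H \<theta> (mulB S \<xi> \<eta>) + (ancA S x (H \<theta> \<eta>) - dpair S \<eta> (brA S x z)) - (- dpair S \<xi> (mulA S z y))
     - ancA S z p"
    by (simp add: star_def pp dp_diffL dp_addL LieA_pair RA_pair dp_smB dA_pair hdA
        x_def y_def, simp add: hz)
  have c: "cobB2 S H \<xi> \<theta> \<eta> = ancB S \<xi> (H \<theta> \<eta>) - ancB S \<theta> p - H \<theta> (mulB S \<xi> \<eta>)
      + H \<xi> (mulB S \<theta> \<eta>) - H (brB S \<xi> \<theta>) \<eta>"
    by (simp add: cobB2_def p_def)
  have b: "bigbrHH S H \<xi> \<theta> \<eta> = ancA S x (H \<theta> \<eta>) - ancA S z p + dpair S \<xi> (mulA S z y)
      - dpair S \<theta> (mulA S x y) - dpair S \<eta> (brA S x z)"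
    by (simp add: bigbrHH_def x_def y_def z_def hs_pair p_def)
  show ?thesis
    unfolding x_def[symmetric] y_def[symmetric] z_def[symmetric] e1 e2 c b
    by (simp add: algebra_simps)
qed

end

end

end


theorem mainTheorem15:
  fixes S :: "('f::{comm_ring_1,real_algebra_1}, 'a::ab_group_add, 'b::ab_group_add) lsb_data"
    and H :: "'b \<Rightarrow> 'b \<Rightarrow> 'f"
  assumes "ls_bialgebroid S"
    and "tensorAA S H"
  shows "dirac S (graphH S H) \<longleftrightarrow>
           ((\<forall>\<xi> \<eta>. H \<xi> \<eta> = H \<eta> \<xi>) \<and>
            (\<forall>\<xi>1 \<xi>2 \<xi>3. cobB2 S H \<xi>1 \<xi>2 \<xi>3 - bigbrHH S H \<xi>1 \<xi>2 \<xi>3 = 0))"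
proof -
  note bi = assms(1) and tH = assms(2)
  note hp = hs_pair[OF bi tH]
  let ?G = "graphH S H"
  have iso_sym: "isotropic_minus S ?G \<longleftrightarrow> (\<forall>\<xi> \<eta>. H \<xi> \<eta> = H \<eta> \<xi>)"
    unfolding isotropic_minus_def graphH_def pform_minus_def
    by (auto simp: hp)
  have closure: "(\<forall>e1\<in>?G. \<forall>e2\<in>?G. star S e1 e2 \<in> ?G) \<longleftrightarrow>
      (\<forall>\<xi>1 \<xi>2 \<xi>3. cobB2 S H \<xi>1 \<xi>2 \<xi>3 - bigbrHH S H \<xi>1 \<xi>2 \<xi>3 = 0)"
    if sym: "\<And>\<xi> \<eta>. H \<xi> \<eta> = H \<eta> \<xi>"
  proof
    assume cl: "\<forall>e1\<in>?G. \<forall>e2\<in>?G. star S e1 e2 \<in> ?G"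
    show "\<forall>\<xi>1 \<xi>2 \<xi>3. cobB2 S H \<xi>1 \<xi>2 \<xi>3 - bigbrHH S H \<xi>1 \<xi>2 \<xi>3 = 0"
    proof (intro allI)
      fix \<xi>1 \<xi>2 \<xi>3
      define st where "st = star S (hsharp S H \<xi>1, \<xi>1) (hsharp S H \<xi>3, \<xi>3)"
      have "st \<in> ?G" using cl unfolding st_def by (auto simp: in_graph[OF bi tH])
      hence f: "fst st = hsharp S H (snd st)" using in_graph[OF bi tH, of "fst st" "snd st"] by simp
      have "cobB2 S H \<xi>1 \<xi>2 \<xi>3 - bigbrHH S H \<xi>1 \<xi>2 \<xi>3
          = dpair S \<xi>2 (fst st) - dpair S (snd st) (hsharp S H \<xi>2)"
        using key[OF bi tH sym, of \<xi>2 \<xi>1 \<xi>3] by (simp add: st_def)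
      also have "\<dots> = 0" by (simp add: f hp sym[of \<xi>2])
      finally show "cobB2 S H \<xi>1 \<xi>2 \<xi>3 - bigbrHH S H \<xi>1 \<xi>2 \<xi>3 = 0" .
    qed
  next
    assume co: "\<forall>\<xi>1 \<xi>2 \<xi>3. cobB2 S H \<xi>1 \<xi>2 \<xi>3 - bigbrHH S H \<xi>1 \<xi>2 \<xi>3 = 0"
    show "\<forall>e1\<in>?G. \<forall>e2\<in>?G. star S e1 e2 \<in> ?G"
    proof (intro ballI)
      fix e1 e2 assume "e1 \<in> ?G" "e2 \<in> ?G"
      then obtain \<xi> \<eta> where e: "e1 = (hsharp S H \<xi>, \<xi>)" "e2 = (hsharp S H \<eta>, \<eta>)"
        by (auto simp: graphH_def)
      define st where "st = star S e1 e2"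
      have "fst st - hsharp S H (snd st) = 0"
      proof (rule nondegA[OF bi])
        fix \<theta>
        have "dpair S \<theta> (fst st - hsharp S H (snd st))
            = dpair S \<theta> (fst st) - dpair S (snd st) (hsharp S H \<theta>)"
          by (simp add: dp_diffR[OF bi] hp sym[of \<theta>])
        also have "\<dots> = cobB2 S H \<xi> \<theta> \<eta> - bigbrHH S H \<xi> \<theta> \<eta>"
          unfolding st_def e by (rule key[OF bi tH sym])
        also have "\<dots> = 0" using co by blast
        finally show "dpair S \<theta> (fst st - hsharp S H (snd st)) = 0" .
      qed
      hence "(fst st, snd st) \<in> ?G" by (simp add: in_graph[OF bi tH])
      thus "star S e1 e2 \<in> ?G" by (simp add: st_def)
    qed
  qed
  have maxi: "max_isotropic_minus S ?G" if sym: "\<And>\<xi> \<eta>. H \<xi> \<eta> = H \<eta> \<xi>"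
    unfolding max_isotropic_minus_def
  proof (intro conjI allI impI)
    show "submod S ?G" by (rule graph_submod[OF bi tH])
    show "isotropic_minus S ?G" using iso_sym sym by blast
    fix L' assume L': "submod S L' \<and> isotropic_minus S L' \<and> ?G \<subseteq> L'"
    show "L' = ?G"
    proof
      show "?G \<subseteq> L'" using L' by blast
      show "L' \<subseteq> ?G"
      proof
        fix e assume eL: "e \<in> L'"
        obtain x \<xi> where ex: "e = (x, \<xi>)" by (cases e)
        have h: "(hsharp S H \<xi>, \<xi>) \<in> L'" using L' by (auto simp: graphH_def)
        have "(smA S (-1) (hsharp S H \<xi>), smB S (-1) \<xi>) \<in> L'"
          using L' h unfolding submod_def by force
        hence "(- hsharp S H \<xi>, - \<xi>) \<in> L'"
          by (simp add: fm(2)[OF fmA[OF bi]] fm(2)[OF fmB[OF bi]])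
        hence "(x + - hsharp S H \<xi>, \<xi> + - \<xi>) \<in> L'"
          using L' eL ex unfolding submod_def by force
        hence z: "(x - hsharp S H \<xi>, 0) \<in> L'" by simp
        have "x - hsharp S H \<xi> = 0"
        proof (rule nondegA[OF bi])
          fix \<eta>
          have "(hsharp S H \<eta>, \<eta>) \<in> L'" using L' by (auto simp: graphH_def)
          hence "pform_minus S (x - hsharp S H \<xi>, 0) (hsharp S H \<eta>, \<eta>) = 0"
            using L' z unfolding isotropic_minus_def by blast
          thus "dpair S \<eta> (x - hsharp S H \<xi>) = 0"
            by (simp add: pform_minus_def dp_0L[OF bi])
        qed
        thus "e \<in> ?G" by (simp add: ex in_graph[OF bi tH])
      qed
    qed
  qed
  show ?thesis
  proof
    assume d: "dirac S ?G"
    hence sym: "\<forall>\<xi> \<eta>. H \<xi> \<eta> = H \<eta> \<xi>" using iso_sym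
      unfolding dirac_def max_isotropic_minus_def by blast
    thus "(\<forall>\<xi> \<eta>. H \<xi> \<eta> = H \<eta> \<xi>) \<and>
            (\<forall>\<xi>1 \<xi>2 \<xi>3. cobB2 S H \<xi>1 \<xi>2 \<xi>3 - bigbrHH S H \<xi>1 \<xi>2 \<xi>3 = 0)"
      using closure d unfolding dirac_def by blast
  next
    assume r: "(\<forall>\<xi> \<eta>. H \<xi> \<eta> = H \<eta> \<xi>) \<and>
            (\<forall>\<xi>1 \<xi>2 \<xi>3. cobB2 S H \<xi>1 \<xi>2 \<xi>3 - bigbrHH S H \<xi>1 \<xi>2 \<xi>3 = 0)"
    hence sym: "\<And>\<xi> \<eta>. H \<xi> \<eta> = H \<eta> \<xi>" by blast
    show "dirac S ?G" unfolding dirac_def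
      using maxi[OF sym] closure[OF sym] r by blast
  qed
qed

end
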